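(* Let $G$ be a nice graph with no two adjacent vertices of the same degree. If $G$ has an interval coloring, then $\chi'_{qm\Sigma}(G)=2$.
   Context: All graphs are simple and finite. A $k$-edge-coloring of $G$ is any map $c:E(G)\to\{1,\dots,k\}$. An interval coloring of $G$ is a $k$-edge-coloring (for some $k$) in which the colors of the edges incident to each vertex are pairwise distinct and form an interval of consecutive integers. A $k$-edge-coloring $c$ induces $\sigma_c(v)=\sum_{u\in N(v)}c(vu)$; it is neighbor sum distinguishing (NSD) if $\sigma_c(u)\ne\sigma_c(v)$ for every edge $uv$, and quasi-majority if every vertex $v$ is incident to at most $\lceil d(v)/2\rceil$ edges of each single color. $\chi'_{qm\Sigma}(G)$ denotes the least $k$ such that $G$ has a $k$-edge-coloring that is both quasi-majority and NSD. A graph is nice if it has no connected component isomorphic to $K_2$. *)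

theory Defs
  imports Main
begin

definition simple_graph :: "'a set \<Rightarrow> 'a set set \<Rightarrow> bool" where
  "simple_graph V E \<longleftrightarrow> finite V \<and>
     (\<forall>e\<in>E. \<exists>u v. e = {u, v} \<and> u \<noteq> v \<and> u \<in> V \<and> v \<in> V)"

definition nbrs :: "'a set set \<Rightarrow> 'a \<Rightarrow> 'a set" where
  "nbrs E v = {u. {v, u} \<in> E}"

definition degree :: "'a set set \<Rightarrow> 'a \<Rightarrow> nat" where
  "degree E v = card (nbrs E v)"

definition incident :: "'a set set \<Rightarrow> 'a \<Rightarrow> 'a set set" where
  "incident E v = {e \<in> E. v \<in> e}"

text \<open>Nice: no connected component isomorphic to K2, i.e. no edge uv whose
  endpoints have no other neighbours (then {u,v} would be a K2 component).\<close>
definition nice :: "'a set set \<Rightarrow> bool" where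
  "nice E \<longleftrightarrow> \<not> (\<exists>u v. {u, v} \<in> E \<and> nbrs E u = {v} \<and> nbrs E v = {u})"

definition edge_coloring :: "'a set set \<Rightarrow> nat \<Rightarrow> ('a set \<Rightarrow> nat) \<Rightarrow> bool" where
  "edge_coloring E k c \<longleftrightarrow> (\<forall>e\<in>E. c e \<in> {1..k})"

definition interval_coloring :: "'a set \<Rightarrow> 'a set set \<Rightarrow> ('a set \<Rightarrow> nat) \<Rightarrow> bool" where
  "interval_coloring V E c \<longleftrightarrow> (\<exists>k. edge_coloring E k c) \<and>
     (\<forall>v\<in>V. inj_on c (incident E v) \<and> (\<exists>a b. c ` incident E v = {a..b}))"

definition sigma :: "'a set set \<Rightarrow> ('a set \<Rightarrow> nat) \<Rightarrow> 'a \<Rightarrow> nat" where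
  "sigma E c v = (\<Sum>u\<in>nbrs E v. c {v, u})"

definition nsd :: "'a set set \<Rightarrow> ('a set \<Rightarrow> nat) \<Rightarrow> bool" where
  "nsd E c \<longleftrightarrow> (\<forall>u v. {u, v} \<in> E \<longrightarrow> sigma E c u \<noteq> sigma E c v)"

text \<open>Quasi-majority: at most ceil(d(v)/2) = (d(v)+1) div 2 edges of each colour at v.\<close>
definition quasi_majority :: "'a set \<Rightarrow> 'a set set \<Rightarrow> ('a set \<Rightarrow> nat) \<Rightarrow> bool" where
  "quasi_majority V E c \<longleftrightarrow>
     (\<forall>v\<in>V. \<forall>i. card {e \<in> incident E v. c e = i} \<le> (degree E v + 1) div 2)"

definition chi_qm_sigma :: "'a set \<Rightarrow> 'a set set \<Rightarrow> nat" where
  "chi_qm_sigma V E = (LEAST k. \<exists>c. edge_coloring E k c \<and> quasi_majority V E c \<and> nsd E c)"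

end

theory Submission
  imports Defs
begin

lemma count_even_ivl:
  "card {x\<in>{a..<a+n}. even (x::nat)} = (if even a then (n+1) div 2 else n div 2)"
proof (induction n)
  case 0
  then show ?case by simp
next
  case (Suc n)
  have eq: "{x\<in>{a..<a+Suc n}. even x} =
      (if even (a+n) then insert (a+n) {x\<in>{a..<a+n}. even x} else {x\<in>{a..<a+n}. even x})"
    by (cases "even (a+n)") (auto simp: less_Suc_eq)
  show ?case
  proof (cases "even (a+n)")
    case True
    then have "card {x\<in>{a..<a+Suc n}. even x} = Suc (card {x\<in>{a..<a+n}. even x})"
      using eq by simp
    then show ?thesis using Suc True by auto
  next
    case False
    then have "card {x\<in>{a..<a+Suc n}. even x} = card {x\<in>{a..<a+n}. even x}"
      using eq by simp
    then show ?thesis using Suc False by auto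
  qed
qed

lemma sum_parity:
  assumes "finite I"
  shows "(\<Sum>e\<in>I. (if even (c e) then 2 else 1::nat)) = card I + card {e\<in>I. even ((c::'b\<Rightarrow>nat) e)}"
  using assms
proof (induction I rule: finite_induct)
  case empty
  then show ?case by simp
next
  case (insert x F)
  have "{e\<in>insert x F. even (c e)} = (if even (c x) then insert x {e\<in>F. even (c e)} else {e\<in>F. even (c e)})"
    by auto
  then show ?case using insert by auto
qed

lemma vertex_even:
  assumes "finite I" "inj_on c I" "c ` I = {a..b}"
  shows "card {e\<in>I. even ((c::'b\<Rightarrow>nat) e)} = (if even a then (card I+1) div 2 else card I div 2)"
proof -
  have "card {e\<in>I. even (c e)} = card (c ` {e\<in>I. even (c e)})"
    by (rule card_image[symmetric]) (use assms(2) in \<open>auto intro: inj_on_subset\<close>)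
  also have "c ` {e\<in>I. even (c e)} = {x\<in>{a..b}. even x}" using assms(3) by auto
  also have "{a..b} = {a..<a + card I}"
  proof -
    have "card I = card {a..b}" using assms by (metis card_image)
    then have "card I = Suc b - a" by simp
    then show ?thesis by auto
  qed
  finally show ?thesis using count_even_ivl by simp
qed

lemma vertex_odd:
  assumes "finite I"
  shows "card {e\<in>I. odd ((c::'b\<Rightarrow>nat) e)} = card I - card {e\<in>I. even (c e)}"
proof -
  have "{e\<in>I. odd (c e)} = I - {e\<in>I. even (c e)}" by auto
  then show ?thesis using assms by (simp add: card_Diff_subset)
qed

lemma arith_key:
  fixes du dv eu ev :: nat
  assumes "du \<noteq> dv" "eu = du div 2 \<or> eu = (du + 1) div 2" "ev = dv div 2 \<or> ev = (dv + 1) div 2"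
  shows "du + eu \<noteq> dv + ev"
proof -
  have g: "d = 2 * ((d + e) div 3) + (if (d + e) mod 3 = 0 then 0 else 1)"
    if "e = d div 2 \<or> e = (d + 1) div 2" for d e :: nat
  proof (cases "even d")
    case True
    then obtain p where "d = 2*p" by blast
    with that show ?thesis by auto
  next
    case False
    then obtain p where "d = 2*p+1" using oddE by blast
    with that show ?thesis by auto
  qed
  show ?thesis using g[OF assms(2)] g[OF assms(3)] assms(1) by metis
qed

theorem mainTheorem17:
  fixes V :: "'a set" and E :: "'a set set"
  assumes "simple_graph V E"
    and "E \<noteq> {}"
    and "nice E"
    and "\<forall>u v. {u, v} \<in> E \<longrightarrow> degree E u \<noteq> degree E v"
    and "\<exists>c. interval_coloring V E c"
  shows "chi_qm_sigma V E = 2"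
proof -
  obtain c where ic: "interval_coloring V E c" using assms(5) by blast
  define d where "d e = (if even (c e) then 2 else 1::nat)" for e
  have finV: "finite V" using assms(1) unfolding simple_graph_def by blast
  have sgE: "\<forall>e\<in>E. \<exists>u v. e = {u, v} \<and> u \<noteq> v \<and> u \<in> V \<and> v \<in> V"
    using assms(1) unfolding simple_graph_def by (rule conjunct2)
  have edgeV: "u \<in> V \<and> v \<in> V \<and> u \<noteq> v" if "{u,v} \<in> E" for u v
  proof -
    from bspec[OF sgE that] obtain x y where xy: "{u,v} = {x,y}" "x \<noteq> y" "x \<in> V" "y \<in> V"
      by blast
    have "u \<in> {x,y}" "v \<in> {x,y}" using xy(1) by (metis insertI1, metis insertI1 insert_commute)
    moreover have "u \<noteq> v" using xy(1,2) by (metis doubleton_eq_iff)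
    ultimately show ?thesis using xy(3,4) by blast
  qed
  have Eform: "\<exists>x y. e = {x,y} \<and> x \<noteq> y" if "e \<in> E" for e
    using bspec[OF sgE that] by blast
  have "E \<subseteq> Pow V"
  proof
    fix e assume "e \<in> E"
    from bspec[OF sgE this] obtain x y where "e = {x,y}" "x \<in> V" "y \<in> V" by blast
    then show "e \<in> Pow V" by simp
  qed
  then have finE: "finite E" using finV by (rule finite_subset[OF _ iffD2[OF finite_Pow_iff]])
  have fin_inc: "finite (incident E v)" for v unfolding incident_def using finE by simp
  have inc_img: "incident E v = (\<lambda>u. {v,u}) ` nbrs E v" for v
  proof
    show "incident E v \<subseteq> (\<lambda>u. {v,u}) ` nbrs E v"
    proof
      fix e assume "e \<in> incident E v"
      then have e: "e \<in> E" "v \<in> e" unfolding incident_def by auto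
      then obtain x y where "e = {x,y}" using Eform by blast
      with e show "e \<in> (\<lambda>u. {v,u}) ` nbrs E v" unfolding nbrs_def
        by (auto simp: insert_commute)
    qed
    show "(\<lambda>u. {v,u}) ` nbrs E v \<subseteq> incident E v" unfolding nbrs_def incident_def by auto
  qed
  have injn: "inj_on (\<lambda>u. {v,u}) (nbrs E v)" for v
    unfolding inj_on_def by (auto simp: doubleton_eq_iff)
  have deg_inc: "degree E v = card (incident E v)" for v
    unfolding degree_def inc_img using injn by (simp add: card_image)
  have sig: "sigma E f v = sum f (incident E v)" for f v
    unfolding sigma_def inc_img using injn by (simp add: sum.reindex)
  have vx: "\<exists>ev. card {e\<in>incident E v. even (c e)} = ev \<and>
        (ev = degree E v div 2 \<or> ev = (degree E v + 1) div 2)" if "v \<in> V" for v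
  proof -
    from ic that obtain a b where "inj_on c (incident E v)" "c ` incident E v = {a..b}"
      unfolding interval_coloring_def by blast
    from vertex_even[OF fin_inc this] show ?thesis by (simp add: deg_inc)
  qed
  have sigd: "sigma E d v = degree E v + card {e\<in>incident E v. even (c e)}" for v
    unfolding sig d_def deg_inc by (rule sum_parity[OF fin_inc])
  have P2: "edge_coloring E 2 d \<and> quasi_majority V E d \<and> nsd E d"
  proof (intro conjI)
    show "edge_coloring E 2 d" unfolding edge_coloring_def d_def by auto
    show "quasi_majority V E d" unfolding quasi_majority_def
    proof (intro ballI allI)
      fix v and i :: nat assume v: "v \<in> V"
      obtain ev where ev: "card {e\<in>incident E v. even (c e)} = ev"
        "ev = degree E v div 2 \<or> ev = (degree E v + 1) div 2" using vx[OF v] by blast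
      have od: "card {e\<in>incident E v. odd (c e)} = degree E v - ev"
        using vertex_odd[OF fin_inc, of v c] ev(1) deg_inc[of v] by simp
      consider "i = 2" | "i = 1" | "i \<noteq> 1 \<and> i \<noteq> 2" by blast
      then show "card {e \<in> incident E v. d e = i} \<le> (degree E v + 1) div 2"
      proof cases
        case 1
        then have "{e \<in> incident E v. d e = i} = {e\<in>incident E v. even (c e)}"
          unfolding d_def by auto
        then show ?thesis using ev by auto
      next
        case 2
        then have "{e \<in> incident E v. d e = i} = {e\<in>incident E v. odd (c e)}"
          unfolding d_def by auto
        then show ?thesis using ev od by auto
      next
        case 3
        then have "{e \<in> incident E v. d e = i} = {}" unfolding d_def by auto
        then have "card {e \<in> incident E v. d e = i} = 0" by (simp only: card.empty)
        then show ?thesis by simp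
      qed
    qed
    show "nsd E d" unfolding nsd_def
    proof (intro allI impI)
      fix u v assume uv: "{u,v} \<in> E"
      then have "u \<in> V" "v \<in> V" using edgeV by auto
      from vx[OF this(1)] vx[OF this(2)] obtain eu ev where
        "card {e\<in>incident E u. even (c e)} = eu"
        "eu = degree E u div 2 \<or> eu = (degree E u + 1) div 2"
        "card {e\<in>incident E v. even (c e)} = ev"
        "ev = degree E v div 2 \<or> ev = (degree E v + 1) div 2" by blast
      moreover have "degree E u \<noteq> degree E v" using assms(4) uv by blast
      ultimately show "sigma E d u \<noteq> sigma E d v" unfolding sigd using arith_key by metis
    qed
  qed
  have notP: False if "k < 2" "edge_coloring E k c'" "quasi_majority V E c'" for k c'
  proof -
    obtain e where "e \<in> E" using assms(2) by blast
    then obtain u v where uv: "{u,v} \<in> E" using Eform by blast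
    have "u \<in> nbrs E v" "v \<in> nbrs E u" unfolding nbrs_def using uv by (auto simp: insert_commute)
    moreover have "finite (nbrs E w)" for w using card_ge_0_finite
      by (metis deg_inc fin_inc finite_imageD inc_img injn)
    ultimately have "degree E u \<ge> 1" "degree E v \<ge> 1" unfolding degree_def
      by (auto simp: Suc_le_eq card_gt_0_iff)
    moreover have "degree E u \<noteq> degree E v" using assms(4) uv by blast
    ultimately have "degree E u \<ge> 2 \<or> degree E v \<ge> 2" by linarith
    then obtain w where w: "w \<in> {u,v}" "degree E w \<ge> 2" by blast
    have wV: "w \<in> V" using w(1) edgeV[OF uv] by blast
    have k1: "k = 1" using that(1,2) uv unfolding edge_coloring_def by fastforce
    have "{e \<in> incident E w. c' e = 1} = incident E w"
      using that(2) k1 unfolding edge_coloring_def incident_def by auto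
    then have "degree E w \<le> (degree E w + 1) div 2"
      using that(3) wV deg_inc unfolding quasi_majority_def by metis
    then show False using w(2) by linarith
  qed
  show ?thesis unfolding chi_qm_sigma_def
  proof (rule Least_equality)
    show "\<exists>c. edge_coloring E 2 c \<and> quasi_majority V E c \<and> nsd E c" using P2 by blast
  next
    fix k assume "\<exists>c. edge_coloring E k c \<and> quasi_majority V E c \<and> nsd E c"
    then show "2 \<le> k" using notP by (meson not_le)
  qed
qed

end
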